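(* Let $X\in\mathfrak{W}$. If $X(1)=0$ and $XL_{z_k}=L_{z_k}X$ on $\mathfrak{H}^1$ for every $k\ge1$, then $X=0$.
   Context: Let $\mathfrak{H}=\mathbb{Q}\langle x,y\rangle$, $\mathfrak{H}^1=\mathbb{Q}+\mathfrak{H}y$; $L_w(w')=ww'$; $z_k=x^{k-1}y$. The harmonic product $\ast$ on $\mathfrak{H}^1$ is the $\mathbb{Q}$-bilinear map with $1\ast w=w\ast1=w$ and $z_kw\ast z_lw'=z_k(w\ast z_lw')+z_l(z_kw\ast w')+z_{k+l}(w\ast w')$; $\mathcal{H}_w(v)=w\ast v$; $\mathfrak{W}$ is the $\mathbb{Q}$-span of the operators $\mathcal{H}_w$ ($w\in\mathfrak{H}^1$) on $\mathfrak{H}^1$. *)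

theory Defs
  imports Complex_Main "HOL-Library.Poly_Mapping"
begin

text \<open>Letters x and y; words are lists of letters; the algebra H = Q<x,y> is the
  free Q-vector space on words (finitely supported coefficient functions), with
  concatenation of words as the monomial product.\<close>

datatype letter = Lx | Ly

type_synonym word = "letter list"
type_synonym H = "word \<Rightarrow>\<^sub>0 rat"

definition smul :: "rat \<Rightarrow> H \<Rightarrow> H" where
  "smul c p = Poly_Mapping.map (\<lambda>a. c * a) p"

definition lin_ext :: "(word \<Rightarrow> H) \<Rightarrow> H \<Rightarrow> H" where
  "lin_ext f p = (\<Sum>a\<in>Poly_Mapping.keys p. smul (Poly_Mapping.lookup p a) (f a))"

text \<open>H^1 = Q + H y: span of the empty word and words ending in y.\<close>
definition H1 :: "H set" where
  "H1 = {p. \<forall>a\<in>Poly_Mapping.keys p. a = [] \<or> last a = Ly}"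

definition Lmul :: "word \<Rightarrow> H \<Rightarrow> H" where
  "Lmul w p = lin_ext (\<lambda>a. Poly_Mapping.single (w @ a) 1) p"

definition z :: "nat \<Rightarrow> word" where
  "z k = replicate (k - 1) Lx @ [Ly]"

definition zword :: "nat list \<Rightarrow> word" where
  "zword ks = concat (map z ks)"

fun zidx :: "nat \<Rightarrow> word \<Rightarrow> nat list" where
  "zidx n [] = []"
| "zidx n (Lx # w) = zidx (Suc n) w"
| "zidx n (Ly # w) = Suc n # zidx 0 w"

function hw :: "nat list \<Rightarrow> nat list \<Rightarrow> H" where
  "hw [] v = Poly_Mapping.single (zword v) 1"
| "hw (k # u) [] = Poly_Mapping.single (zword (k # u)) 1"
| "hw (k # u) (l # v) =
     Lmul (z k) (hw u (l # v)) + Lmul (z l) (hw (k # u) v) + Lmul (z (k + l)) (hw u v)"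
  by pat_completeness auto
termination by (relation "measure (\<lambda>(u, v). length u + length v)") auto

text \<open>The harmonic product, extended bilinearly (meaningful on H^1).\<close>
definition hprod :: "H \<Rightarrow> H \<Rightarrow> H" (infixl "\<star>" 70) where
  "p \<star> q = lin_ext (\<lambda>a. lin_ext (\<lambda>b. hw (zidx 0 a) (zidx 0 b)) q) p"

definition Wspace :: "(H \<Rightarrow> H) set" where
  "Wspace = {X. \<exists>(n::nat) (c::nat \<Rightarrow> rat) (w::nat \<Rightarrow> H). (\<forall>i<n. w i \<in> H1) \<and>
                 X = (\<lambda>v. \<Sum>i<n. smul (c i) (w i \<star> v))}"

end

theory Submission
  imports Defs
begin

lemma lookup_smul: "Poly_Mapping.lookup (smul c p) k = c * Poly_Mapping.lookup p k"
  by (simp add: smul_def Poly_Mapping.map.rep_eq when_def)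

lemma smul_add: "smul c (p + q) = smul c p + smul c q"
  by (rule poly_mapping_eqI) (simp add: lookup_smul lookup_add algebra_simps)
lemma smul_add2: "smul (a + b) p = smul a p + smul b p"
  by (rule poly_mapping_eqI) (simp add: lookup_smul lookup_add algebra_simps)
lemma smul_0: "smul 0 p = 0"
  by (rule poly_mapping_eqI) (simp add: lookup_smul)
lemma smul_0r: "smul c 0 = 0"
  by (rule poly_mapping_eqI) (simp add: lookup_smul)
lemma smul_1: "smul 1 p = p"
  by (rule poly_mapping_eqI) (simp add: lookup_smul)
lemma smul_smul: "smul a (smul b p) = smul (a*b) p"
  by (rule poly_mapping_eqI) (simp add: lookup_smul)
lemma smul_sum: "smul c (sum f S) = (\<Sum>x\<in>S. smul c (f x))"
  by (induction S rule: infinite_finite_induct) (auto simp: smul_0r smul_add)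

lemma lin_ext_superset:
  assumes "finite S" "Poly_Mapping.keys p \<subseteq> S"
  shows "lin_ext f p = (\<Sum>a\<in>S. smul (Poly_Mapping.lookup p a) (f a))"
  unfolding lin_ext_def
  by (rule sum.mono_neutral_left) (use assms in \<open>auto simp: in_keys_iff smul_0\<close>)

lemma lin_ext_add: "lin_ext f (p + q) = lin_ext f p + lin_ext f q"
proof -
  let ?S = "Poly_Mapping.keys p \<union> Poly_Mapping.keys q"
  have "lin_ext f (p + q) = (\<Sum>a\<in>?S. smul (Poly_Mapping.lookup (p+q) a) (f a))"
    using keys_add[of p q] by (intro lin_ext_superset) auto
  also have "\<dots> = (\<Sum>a\<in>?S. smul (Poly_Mapping.lookup p a) (f a)) + (\<Sum>a\<in>?S. smul (Poly_Mapping.lookup q a) (f a))"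
    by (simp add: lookup_add smul_add2 sum.distrib)
  also have "\<dots> = lin_ext f p + lin_ext f q"
    by (subst (1 2) lin_ext_superset[of ?S]) auto
  finally show ?thesis .
qed

lemma lin_ext_smul: "lin_ext f (smul c p) = smul c (lin_ext f p)"
proof -
  have "lin_ext f (smul c p) = (\<Sum>a\<in>Poly_Mapping.keys p. smul (Poly_Mapping.lookup (smul c p) a) (f a))"
    by (rule lin_ext_superset) (auto simp: in_keys_iff lookup_smul)
  also have "\<dots> = smul c (lin_ext f p)"
    by (simp add: lin_ext_def smul_sum lookup_smul smul_smul)
  finally show ?thesis .
qed

lemma lin_ext_fadd: "lin_ext (\<lambda>a. f a + g a) p = lin_ext f p + lin_ext g p"
  by (simp add: lin_ext_def smul_add sum.distrib)

lemma lin_ext_fsmul: "lin_ext (\<lambda>a. smul c (f a)) p = smul c (lin_ext f p)"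
  by (simp add: lin_ext_def smul_sum smul_smul mult.commute)

lemma lin_ext_zero: "lin_ext f 0 = 0"
  by (simp add: lin_ext_def)

lemma lin_ext_single: "lin_ext f (Poly_Mapping.single a 1) = f a"
  by (simp add: lin_ext_def smul_1)

lemma hprod_add: "w \<star> (p + q) = w \<star> p + w \<star> q"
  by (simp add: hprod_def lin_ext_add lin_ext_fadd)

lemma hprod_smul: "w \<star> (smul c p) = smul c (w \<star> p)"
  by (simp add: hprod_def lin_ext_smul lin_ext_fsmul)

lemma decomp: "p = (\<Sum>a\<in>Poly_Mapping.keys p. smul (Poly_Mapping.lookup p a) (Poly_Mapping.single a 1))"
proof -
  have "p = lin_ext (\<lambda>a. Poly_Mapping.single a 1) p"
  proof (rule poly_mapping_eqI)
    fix k
    show "Poly_Mapping.lookup p k = Poly_Mapping.lookup (lin_ext (\<lambda>a. Poly_Mapping.single a 1) p) k"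
      unfolding lin_ext_def
    proof -
      have e: "\<And>x. Poly_Mapping.lookup p x * (if x = k then 1 else 0) = (if x = k then Poly_Mapping.lookup p x else 0)"
        by auto
      show "Poly_Mapping.lookup p k = Poly_Mapping.lookup (\<Sum>a\<in>Poly_Mapping.keys p. smul (Poly_Mapping.lookup p a) (Poly_Mapping.single a 1)) k"
        by (simp add: lookup_sum lookup_smul lookup_single when_def e in_keys_iff)
    qed
  qed
  then show ?thesis by (simp add: lin_ext_def)
qed

lemma split_word: "Ly \<in> set a \<Longrightarrow> \<exists>m b. a = replicate m Lx @ Ly # b"
proof (induction a)
  case Nil then show ?case by simp
next
  case (Cons c a)
  show ?case
  proof (cases c)
    case Lx
    with Cons obtain m b where "a = replicate m Lx @ Ly # b" by auto
    with Lx have "c # a = replicate (Suc m) Lx @ Ly # b" by simp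
    then show ?thesis by blast
  next
    case Ly
    then have "c # a = replicate 0 Lx @ Ly # a" by simp
    then show ?thesis by blast
  qed
qed

theorem mainTheorem15:
  assumes "X \<in> Wspace"
    and "X (Poly_Mapping.single [] 1) = 0"
    and "\<forall>k\<ge>1. \<forall>v\<in>H1. X (Lmul (z k) v) = Lmul (z k) (X v)"
  shows "\<forall>v\<in>H1. X v = 0"
proof -
  from assms(1) obtain n :: nat and c w where Xdef: "X = (\<lambda>v. \<Sum>i<n. smul (c i) (w i \<star> v))"
    unfolding Wspace_def mem_Collect_eq by blast
  have Xadd: "X (p + q) = X p + X q" for p q
    by (simp add: Xdef hprod_add smul_add sum.distrib)
  have Xsmul: "X (smul a p) = smul a (X p)" for a p
    by (simp add: Xdef hprod_smul smul_smul smul_sum mult.commute)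
  have X0: "X 0 = 0"
    using Xsmul[of 0 0] by (simp add: smul_0)
  have Xsum: "X (sum f S) = (\<Sum>x\<in>S. X (f x))" for f :: "word \<Rightarrow> H" and S
    by (induction S rule: infinite_finite_induct) (auto simp: X0 Xadd)
  have Lsingle: "Lmul u (Poly_Mapping.single b 1) = Poly_Mapping.single (u @ b) 1" for u b
    by (simp add: Lmul_def lin_ext_single)
  have word0: "X (Poly_Mapping.single a 1) = 0" if "a = [] \<or> last a = Ly" for a
    using that
  proof (induction "length a" arbitrary: a rule: less_induct)
    case less
    show ?case
    proof (cases "a = []")
      case True then show ?thesis using assms(2) by simp
    next
      case False
      with less.prems have "last a = Ly" by simp
      with False have "Ly \<in> set a" using last_in_set by fastforce
      then obtain m b where ab: "a = replicate m Lx @ Ly # b" using split_word by blast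
      have bH: "b = [] \<or> last b = Ly" using \<open>last a = Ly\<close> ab by (cases b) auto
      have zm: "z (Suc m) = replicate m Lx @ [Ly]" by (simp add: z_def)
      have "Poly_Mapping.single a 1 = Lmul (z (Suc m)) (Poly_Mapping.single b 1)"
        by (simp add: Lsingle zm ab)
      moreover have "Poly_Mapping.single b 1 \<in> H1" using bH by (simp add: H1_def)
      moreover have "X (Poly_Mapping.single b 1) = 0"
        using less.hyps[of b] bH ab by simp
      ultimately show ?thesis using assms(3)
        by (simp add: Lmul_def lin_ext_zero)
    qed
  qed
  show ?thesis
  proof
    fix v assume "v \<in> H1"
    have "X v = (\<Sum>a\<in>Poly_Mapping.keys v. smul (Poly_Mapping.lookup v a) (X (Poly_Mapping.single a 1)))"
      by (subst decomp) (simp add: Xsum Xsmul)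
    also have "\<dots> = 0"
      using \<open>v \<in> H1\<close> word0 by (auto simp: H1_def smul_0r intro!: sum.neutral)
    finally show "X v = 0" .
  qed
qed

end
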